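(* Let $a,b\in\mathbb{R}$ with $0<b\le a$ and $ab=1$, and let $R=[-\frac a2,\frac a2]\times[-\frac b2,\frac b2]$. For every $\Lambda>a+b$ there exists $\tau_0=\tau_0(\Lambda)>0$ such that for every $\tau\in(0,\tau_0)$ the problem $$\min\Big\{\mathrm P_{|\cdot|_1}(\tilde R)+\tfrac1\tau\mathcal D(\tilde R,R):\ \tilde R\subset\mathbb{R}^2\text{ an axis-parallel rectangle},\ |\tilde R|=1,\ \mathrm{Bar}(\tilde R)=0\Big\}$$ has a unique minimizer $R'$. Moreover $R'=[-\frac{a'}2,\frac{a'}2]\times[-\frac{b'}2,\frac{b'}2]$ with $$a'=a-2x(\tau),\quad x(\tau)=x'\tau+O(\tau^2),\quad x'=\frac{2(a-b)}{b(a+b)},\qquad b'=b+2y(\tau),\quad y(\tau)=\frac{b\,x(\tau)}{a-2x(\tau)},$$ and $$a'+b'\le a+b,\quad |a'-a|\le \tau C(\Lambda),\quad |b'-b|\le\tau C(\Lambda),\quad |R\triangle R'|\le \tau C(\Lambda),$$ where $C(\Lambda)$ denotes a constant depending only on $\Lambda$.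
   Context: $|\nu|_1=|\nu_1|+|\nu_2|$, $|z|_\infty=\max\{|z_1|,|z_2|\}$. For a set of finite perimeter $E$, $\mathrm P_{|\cdot|_1}(E)=\int_{\partial^*E}|\nu_E|_1\,d\mathcal H^1$; for a rectangle with sides $\alpha,\beta$ this equals $2\alpha+2\beta$. $d_\infty(z,\partial F)=\inf\{|z-\hat z|_\infty:\hat z\in\partial F\}$, $\mathcal D(E,F)=\int_{E\triangle F}d_\infty(z,\partial F)\,dz$, $\mathrm{Bar}(E)=\int_Ex\,dx$. $O(g)$ denotes a function bounded in absolute value by a constant times $|g|$. *)

theory Defs
  imports "HOL-Analysis.Analysis"
begin

definition linf :: "real \<times> real \<Rightarrow> real" where
  "linf z = max \<bar>fst z\<bar> \<bar>snd z\<bar>"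

definition dinf :: "real \<times> real \<Rightarrow> (real \<times> real) set \<Rightarrow> real" where
  "dinf z S = Inf {linf (z - w) | w. w \<in> S}"

definition Dist :: "(real \<times> real) set \<Rightarrow> (real \<times> real) set \<Rightarrow> real" where
  "Dist E F = (LINT z:((E - F) \<union> (F - E))|lborel. dinf z (frontier F))"

definition Bar :: "(real \<times> real) set \<Rightarrow> real \<times> real" where
  "Bar E = ((LINT z:E|lborel. fst z), (LINT z:E|lborel. snd z))"

definition is_rect :: "(real \<times> real) set \<Rightarrow> bool" where
  "is_rect S \<longleftrightarrow> (\<exists>x1 x2 y1 y2. x1 < x2 \<and> y1 < y2 \<and> S = {x1..x2} \<times> {y1..y2})"

text \<open>Anisotropic (|.|_1) perimeter of an axis-parallel rectangle: 2 alpha + 2 beta.\<close>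
definition perim1_rect :: "(real \<times> real) set \<Rightarrow> real" where
  "perim1_rect S = 2 * (Sup (fst ` S) - Inf (fst ` S)) + 2 * (Sup (snd ` S) - Inf (snd ` S))"

definition centered_rect :: "real \<Rightarrow> real \<Rightarrow> (real \<times> real) set" where
  "centered_rect \<alpha> \<beta> = {-\<alpha>/2..\<alpha>/2} \<times> {-\<beta>/2..\<beta>/2}"

definition admissible :: "(real \<times> real) set \<Rightarrow> bool" where
  "admissible S \<longleftrightarrow> is_rect S \<and> measure lborel S = 1 \<and> Bar S = (0, 0)"

definition energy :: "real \<Rightarrow> (real \<times> real) set \<Rightarrow> (real \<times> real) set \<Rightarrow> real" where
  "energy \<tau> R S = perim1_rect S + Dist S R / \<tau>"

definition is_minimizer :: "real \<Rightarrow> (real \<times> real) set \<Rightarrow> (real \<times> real) set \<Rightarrow> bool" where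
  "is_minimizer \<tau> R S \<longleftrightarrow> admissible S \<and> (\<forall>T. admissible T \<longrightarrow> energy \<tau> R S \<le> energy \<tau> R T)"

end

theory Submission
  imports Defs
begin

lemma linf_nonneg: "0 \<le> linf z" unfolding linf_def by simp

lemma linf_triangle: "linf (p + q) \<le> linf p + linf q"
  unfolding linf_def by (cases p; cases q) (auto simp: max_def abs_if)

lemma linf_le_norm: "linf z \<le> norm z"
proof (cases z)
  case (Pair u v)
  have "\<bar>u\<bar> \<le> norm (u, v)" "\<bar>v\<bar> \<le> norm (u,v)"
    by (auto simp: norm_Pair intro: real_sqrt_ge_abs1 real_sqrt_ge_abs2)
  then show ?thesis using Pair by (simp add: linf_def)
qed

lemma dinf_lip:
  assumes "F \<noteq> {}"
  shows "dinf z F \<le> dinf z' F + linf (z - z')"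
proof -
  have ne: "{linf (z' - w) | w. w \<in> F} \<noteq> {}" using assms by auto
  have bdd: "bdd_below {linf (z - w) | w. w \<in> F}"
    by (rule bdd_belowI[of _ 0]) (auto simp: linf_nonneg)
  have "dinf z F - linf (z - z') \<le> dinf z' F"
    unfolding dinf_def
  proof (rule cInf_greatest[OF ne])
    fix t assume "t \<in> {linf (z' - w) | w. w \<in> F}"
    then obtain w where w: "w \<in> F" "t = linf (z' - w)" by auto
    have "Inf {linf (z - w) | w. w \<in> F} \<le> linf (z - w)"
      by (rule cInf_lower) (use w bdd in blast)+
    also have "\<dots> \<le> linf (z - z') + linf (z' - w)"
      using linf_triangle[of "z - z'" "z' - w"] by simp
    finally show "Inf {linf (z - w) | w. w \<in> F} - linf (z - z') \<le> t" using w by simp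
  qed
  then show ?thesis by simp
qed

lemma dinf_cont:
  assumes "F \<noteq> {}"
  shows "continuous_on S (\<lambda>z. dinf z F)"
proof (rule lipschitz_on_continuous_on[where L=1])
  show "1-lipschitz_on S (\<lambda>z. dinf z F)"
  proof (rule lipschitz_onI)
    fix x y assume "x \<in> S" "y \<in> S"
    have "dinf x F \<le> dinf y F + linf (x - y)" "dinf y F \<le> dinf x F + linf (y - x)"
      using dinf_lip[OF assms] by auto
    moreover have "linf (y - x) = linf (x - y)" unfolding linf_def
      by (cases x; cases y) auto
    moreover have "linf (x - y) \<le> dist x y" using linf_le_norm by (simp add: dist_norm)
    ultimately show "dist (dinf x F) (dinf y F) \<le> 1 * dist x y"
      by (simp add: dist_real_def abs_le_iff)
  qed simp
qed

lemma dinf_nonneg: "F \<noteq> {} \<Longrightarrow> 0 \<le> dinf z F"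
  unfolding dinf_def by (intro cInf_greatest) (auto simp: linf_nonneg)

lemma centered_rect_cbox: "centered_rect a b = cbox (-a/2, -b/2) (a/2, b/2)"
  unfolding centered_rect_def by (simp add: cbox_Pair_eq)

lemma frontier_rect:
  assumes "0 < a" "0 < b"
  shows "frontier (centered_rect a b) =
    {z. \<bar>fst z\<bar> \<le> a/2 \<and> \<bar>snd z\<bar> \<le> b/2 \<and> (\<bar>fst z\<bar> = a/2 \<or> \<bar>snd z\<bar> = b/2)}"
proof -
  have "box (-a/2, -b/2) (a/2, b/2) = {-a/2<..<a/2} \<times> {-b/2<..<b/2}"
    by (auto simp: mem_box Basis_prod_def)
  then show ?thesis
    unfolding centered_rect_cbox frontier_cbox
    by (auto simp: cbox_Pair_eq abs_le_iff) 
qed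

lemma dinf_in:
  assumes "0 < a" "0 < b" "\<bar>u\<bar> \<le> a/2" "\<bar>v\<bar> \<le> b/2"
  shows "dinf (u, v) (frontier (centered_rect a b)) = min (a/2 - \<bar>u\<bar>) (b/2 - \<bar>v\<bar>)"
  unfolding dinf_def frontier_rect[OF assms(1,2)]
proof (rule cInf_eq_minimum)
  define w where "w = (if a/2 - \<bar>u\<bar> \<le> b/2 - \<bar>v\<bar> then (if u \<ge> 0 then a/2 else -a/2, v)
     else (u, if v \<ge> 0 then b/2 else -b/2))"
  show "min (a / 2 - \<bar>u\<bar>) (b / 2 - \<bar>v\<bar>)
    \<in> {linf ((u, v) - w) |w. w \<in> {z. \<bar>fst z\<bar> \<le> a / 2 \<and> \<bar>snd z\<bar> \<le> b / 2 \<and> (\<bar>fst z\<bar> = a / 2 \<or> \<bar>snd z\<bar> = b / 2)}}"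
    apply (rule CollectI, rule exI[of _ w])
    using assms unfolding w_def linf_def by (auto simp: abs_if min_def max_def)
next
  fix t assume "t \<in> {linf ((u, v) - w) |w. w \<in> {z. \<bar>fst z\<bar> \<le> a / 2 \<and> \<bar>snd z\<bar> \<le> b / 2 \<and> (\<bar>fst z\<bar> = a / 2 \<or> \<bar>snd z\<bar> = b / 2)}}"
  then obtain p q where t: "t = linf ((u,v) - (p,q))" "\<bar>p\<bar> \<le> a/2" "\<bar>q\<bar> \<le> b/2" "\<bar>p\<bar> = a/2 \<or> \<bar>q\<bar> = b/2"
    by auto
  have "\<bar>u - p\<bar> \<le> t" "\<bar>v - q\<bar> \<le> t" using t(1) by (auto simp: linf_def)
  then show "min (a / 2 - \<bar>u\<bar>) (b / 2 - \<bar>v\<bar>) \<le> t"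
    using t(2-4) by arith
qed

lemma dinf_out:
  assumes "0 < a" "0 < b" "\<bar>u\<bar> \<le> a/2" "b/2 \<le> \<bar>v\<bar>"
  shows "dinf (u, v) (frontier (centered_rect a b)) = \<bar>v\<bar> - b/2"
  unfolding dinf_def frontier_rect[OF assms(1,2)]
proof (rule cInf_eq_minimum)
  define w where "w = (u, if v \<ge> 0 then b/2 else -b/2)"
  show "\<bar>v\<bar> - b/2
    \<in> {linf ((u, v) - w) |w. w \<in> {z. \<bar>fst z\<bar> \<le> a / 2 \<and> \<bar>snd z\<bar> \<le> b / 2 \<and> (\<bar>fst z\<bar> = a / 2 \<or> \<bar>snd z\<bar> = b / 2)}}"
    apply (rule CollectI, rule exI[of _ w])
    using assms unfolding w_def linf_def by (auto simp: abs_if min_def max_def)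
next
  fix t assume "t \<in> {linf ((u, v) - w) |w. w \<in> {z. \<bar>fst z\<bar> \<le> a / 2 \<and> \<bar>snd z\<bar> \<le> b / 2 \<and> (\<bar>fst z\<bar> = a / 2 \<or> \<bar>snd z\<bar> = b / 2)}}"
  then obtain p q where t: "t = linf ((u,v) - (p,q))" "\<bar>p\<bar> \<le> a/2" "\<bar>q\<bar> \<le> b/2"
    by auto
  have "\<bar>v - q\<bar> \<le> t" using t(1) by (auto simp: linf_def)
  then show "\<bar>v\<bar> - b/2 \<le> t"
    using t(2-3) by arith
qed

lemma frontier_ne: "0 < a \<Longrightarrow> 0 < b \<Longrightarrow> frontier (centered_rect a b) \<noteq> {}"
proof -
  assume "0 < a" "0 < b"
  then have "(a/2, 0) \<in> frontier (centered_rect a b)" by (subst frontier_rect) auto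
  then show ?thesis by blast
qed

lemma ftc_real:
  fixes f F :: "real \<Rightarrow> real"
  assumes "a \<le> b" "\<And>x. x \<in> {a..b} \<Longrightarrow> (F has_real_derivative f x) (at x)"
  shows "(f has_integral (F b - F a)) {a..b}"
  apply (rule fundamental_theorem_of_calculus[OF assms(1)])
  using assms(2) by (auto simp: has_real_derivative_iff_has_vector_derivative[symmetric]
      intro: has_field_derivative_at_within)

lemma J_int:
  fixes s c :: real
  assumes "0 \<le> s" "s \<le> c"
  shows "((\<lambda>v. min s (c - \<bar>v\<bar>)) has_integral (2*c* s - s\<^sup>2)) {-c..c}"
proof -
  have 1: "((\<lambda>v. min s (c - \<bar>v\<bar>)) has_integral ((c*(s-c) + (s-c)^2/2) - (c*(-c) + (-c)^2/2))) {-c..s-c}"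
    apply (rule has_integral_eq[where f="\<lambda>v. c + v"])
     apply (use assms in \<open>auto simp: min_def abs_if\<close>)[1]
    apply (rule ftc_real) using assms apply simp
    by (auto intro!: derivative_eq_intros simp: power2_eq_square)
  have 2: "((\<lambda>v. min s (c - \<bar>v\<bar>)) has_integral (s * (c-s) - s * (s-c))) {s-c..c-s}"
    apply (rule has_integral_eq[where f="\<lambda>v. s"])
     apply (use assms in \<open>auto simp: min_def abs_if\<close>)[1]
    apply (rule ftc_real) using assms apply simp
    by (auto intro!: derivative_eq_intros)
  have 3: "((\<lambda>v. min s (c - \<bar>v\<bar>)) has_integral ((c*c - c^2/2) - (c*(c-s) - (c-s)^2/2))) {c-s..c}"
    apply (rule has_integral_eq[where f="\<lambda>v. c - v"])
     apply (use assms in \<open>auto simp: min_def abs_if\<close>)[1]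
    apply (rule ftc_real) using assms apply simp
    by (auto intro!: derivative_eq_intros simp: power2_eq_square)
  have "((\<lambda>v. min s (c - \<bar>v\<bar>)) has_integral
     (((c*(s-c) + (s-c)^2/2) - (c*(-c) + (-c)^2/2)) + (s * (c-s) - s * (s-c)) + ((c*c - c^2/2) - (c*(c-s) - (c-s)^2/2)))) {-c..c}"
    apply (rule has_integral_combine[OF _ _ has_integral_combine[OF _ _ 1 2] 3])
    using assms by auto
  moreover have "((c*(s-c) + (s-c)^2/2) - (c*(-c) + (-c)^2/2)) + (s * (c-s) - s * (s-c)) + ((c*c - c^2/2) - (c*(c-s) - (c-s)^2/2)) = 2*c* s - s\<^sup>2"
    by (simp add: power2_eq_square algebra_simps)
  ultimately show ?thesis by simp
qed

lemma prod_int: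
  fixes f :: "real \<times> real \<Rightarrow> real"
  assumes cont: "continuous_on (cbox (p,q) (r,s)) f"
    and inner: "\<And>u. u \<in> {p..r} \<Longrightarrow> ((\<lambda>v. f (u,v)) has_integral g u) {q..s}"
    and outer: "(g has_integral I) {p..r}"
  shows "(f has_integral I) (cbox (p,q) (r,s))"
proof -
  have "(f has_integral integral (cbox (p,q) (r,s)) f) (cbox (p,q) (r,s))"
    using integrable_continuous[OF cont] by (simp add: has_integral_integral)
  moreover have "integral (cbox (p,q) (r,s)) f = integral (cbox p r) (\<lambda>u. integral (cbox q s) (\<lambda>v. f (u, v)))"
    by (rule integral_prod_continuous[OF cont])
  moreover have "\<dots> = integral {p..r} g"
    unfolding interval_cbox[symmetric]
    by (rule integral_cong) (use inner integral_unique in blast)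
  moreover have "\<dots> = I" using outer integral_unique by blast
  ultimately show ?thesis by simp
qed

definition phi :: "real \<Rightarrow> real \<Rightarrow> real \<times> real \<Rightarrow> real" where
  "phi a b z = min (a/2 - \<bar>fst z\<bar>) (b/2 - \<bar>snd z\<bar>)"

lemma phi_cont: "continuous_on S (phi a b)"
  unfolding phi_def by (intro continuous_intros)

lemma P1_int:
  assumes "0 < al" "al \<le> a" "a - al \<le> b" 
  shows "(phi a b has_integral (b * ((a-al)/2)^2/2 - ((a-al)/2)^3/3)) (cbox (al/2, -b/2) (a/2, b/2))"
proof (rule prod_int[OF phi_cont])
  fix u assume u: "u \<in> {al/2..a/2}"
  have "((\<lambda>v. min (a/2-u) (b/2 - \<bar>v\<bar>)) has_integral (2*(b/2)*(a/2-u) - (a/2-u)\<^sup>2)) {-(b/2)..b/2}"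
    by (rule J_int) (use u assms in auto)
  moreover have "\<bar>u\<bar> = u" using u assms by auto
  ultimately show "((\<lambda>v. phi a b (u, v)) has_integral (b*(a/2-u) - (a/2-u)\<^sup>2)) {-b/2..b/2}"
    by (simp add: phi_def)
next
  have "((\<lambda>u. b*(a/2-u) - (a/2-u)\<^sup>2) has_integral
     ((\<lambda>u. -(b*(a/2-u)^2/2 - (a/2-u)^3/3)) (a/2) - (\<lambda>u. -(b*(a/2-u)^2/2 - (a/2-u)^3/3)) (al/2))) {al/2..a/2}"
    apply (rule ftc_real) using assms apply simp
    by (auto intro!: derivative_eq_intros; (simp add: field_simps power2_eq_square power3_eq_cube; algebra)?)
  moreover have "(\<lambda>u. -(b*(a/2-u)^2/2 - (a/2-u)^3/3)) (a/2) - (\<lambda>u. -(b*(a/2-u)^2/2 - (a/2-u)^3/3)) (al/2)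
     = b * ((a-al)/2)^2/2 - ((a-al)/2)^3/3"
    by (simp add: field_simps)
  ultimately show "((\<lambda>u. b*(a/2-u) - (a/2-u)\<^sup>2) has_integral (b * ((a-al)/2)^2/2 - ((a-al)/2)^3/3)) {al/2..a/2}"
    by simp
qed

lemma P2_int:
  assumes "0 < al" "al \<le> a" "a - al \<le> b" 
  shows "(phi a b has_integral (b * ((a-al)/2)^2/2 - ((a-al)/2)^3/3)) (cbox (-a/2, -b/2) (-al/2, b/2))"
proof (rule prod_int[OF phi_cont])
  fix u assume u: "u \<in> {-a/2..-al/2}"
  have "((\<lambda>v. min (a/2+u) (b/2 - \<bar>v\<bar>)) has_integral (2*(b/2)*(a/2+u) - (a/2+u)\<^sup>2)) {-(b/2)..b/2}"
    by (rule J_int) (use u assms in auto)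
  moreover have "\<bar>u\<bar> = -u" using u assms by auto
  ultimately show "((\<lambda>v. phi a b (u, v)) has_integral (b*(a/2+u) - (a/2+u)\<^sup>2)) {-b/2..b/2}"
    by (simp add: phi_def)
next
  have "((\<lambda>u. b*(a/2+u) - (a/2+u)\<^sup>2) has_integral
     ((\<lambda>u. b*(a/2+u)^2/2 - (a/2+u)^3/3) (-al/2) - (\<lambda>u. b*(a/2+u)^2/2 - (a/2+u)^3/3) (-a/2))) {-a/2..-al/2}"
    apply (rule ftc_real) using assms apply simp
    by (auto intro!: derivative_eq_intros; (simp add: field_simps power2_eq_square power3_eq_cube; algebra)?)
  moreover have "(\<lambda>u. b*(a/2+u)^2/2 - (a/2+u)^3/3) (-al/2) - (\<lambda>u. b*(a/2+u)^2/2 - (a/2+u)^3/3) (-a/2)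
     = b * ((a-al)/2)^2/2 - ((a-al)/2)^3/3"
    by (simp add: field_simps)
  ultimately show "((\<lambda>u. b*(a/2+u) - (a/2+u)\<^sup>2) has_integral (b * ((a-al)/2)^2/2 - ((a-al)/2)^3/3)) {-a/2..-al/2}"
    by simp
qed

definition psi :: "real \<Rightarrow> real \<times> real \<Rightarrow> real" where
  "psi b z = \<bar>snd z\<bar> - b/2"

lemma psi_cont: "continuous_on S (psi b)"
  unfolding psi_def by (intro continuous_intros)

lemma P3_int:
  assumes "0 < al" "0 < b" "b \<le> be"
  shows "(psi b has_integral (al * ((be-b)/2)^2/2)) (cbox (-al/2, b/2) (al/2, be/2))"
proof (rule prod_int[OF psi_cont])
  fix u assume u: "u \<in> {-al/2..al/2}"
  have "((\<lambda>v. v - b/2) has_integral ((\<lambda>v. (v - b/2)^2/2) (be/2) - (\<lambda>v. (v - b/2)^2/2) (b/2))) {b/2..be/2}"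
    apply (rule ftc_real) using assms apply simp
    by (auto intro!: derivative_eq_intros simp: power2_eq_square)
  then show "((\<lambda>v. psi b (u, v)) has_integral ((be-b)/2)^2/2) {b/2..be/2}"
    apply (subst has_integral_cong[where g="\<lambda>v. v - b/2"])
    using assms by (auto simp: psi_def field_simps)
next
  show "((\<lambda>u. ((be-b)/2)^2/2) has_integral (al * ((be-b)/2)^2/2)) {-al/2..al/2}"
    using has_integral_const_real[of "((be-b)/2)^2/2" "-al/2" "al/2"] assms by simp
qed

lemma P4_int:
  assumes "0 < al" "0 < b" "b \<le> be"
  shows "(psi b has_integral (al * ((be-b)/2)^2/2)) (cbox (-al/2, -be/2) (al/2, -b/2))"
proof (rule prod_int[OF psi_cont])
  fix u assume u: "u \<in> {-al/2..al/2}"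
  have "((\<lambda>v. -v - b/2) has_integral ((\<lambda>v. - ((v + b/2)^2/2)) (-b/2) - (\<lambda>v. - ((v + b/2)^2/2)) (-be/2))) {-be/2..-b/2}"
    apply (rule ftc_real) using assms apply simp
    by (auto intro!: derivative_eq_intros simp: power2_eq_square algebra_simps)
  then show "((\<lambda>v. psi b (u, v)) has_integral ((be-b)/2)^2/2) {-be/2..-b/2}"
    apply (subst has_integral_cong[where g="\<lambda>v. -v - b/2"])
    using assms by (auto simp: psi_def field_simps power2_commute)
next
  show "((\<lambda>u. ((be-b)/2)^2/2) has_integral (al * ((be-b)/2)^2/2)) {-al/2..al/2}"
    using has_integral_const_real[of "((be-b)/2)^2/2" "-al/2" "al/2"] assms by simp
qed

lemma si:
  fixes f :: "real \<times> real \<Rightarrow> real"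
  assumes T: "T \<in> sets borel" "T \<subseteq> cbox l h" and f: "continuous_on UNIV f"
  shows "set_integrable lborel T f"
proof -
  have "compact (f ` cbox l h)"
    by (rule compact_continuous_image[OF continuous_on_subset[OF f]]) auto
  then obtain B where B: "\<And>x. x \<in> cbox l h \<Longrightarrow> norm (f x) \<le> B"
    using compact_imp_bounded bounded_iff by (metis imageI)
  have fm: "f \<in> borel_measurable borel" using f by (simp add: continuous_imp_measurable_on_sets_lebesgue borel_measurable_continuous_onI)
  show ?thesis
    unfolding set_integrable_def
  proof (rule integrableI_bounded_set[where A=T and B=B])
    show "T \<in> sets lborel" using T by simp
    show "(\<lambda>x. indicator T x *\<^sub>R f x) \<in> borel_measurable lborel"
      using fm T by (simp add: borel_measurable_indicator)
    have "emeasure lborel T \<le> emeasure lborel (cbox l h)"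
      by (rule emeasure_mono) (use T in auto)
    then show "emeasure lborel T < \<infinity>" using emeasure_lborel_cbox_finite
      by (metis order.strict_trans1)
    show "AE x in lborel. x \<in> T \<longrightarrow> norm (indicator T x *\<^sub>R f x) \<le> B"
      using B T by (intro AE_I2) (auto simp: indicator_def)
    show "AE x in lborel. x \<notin> T \<longrightarrow> indicator T x *\<^sub>R f x = 0"
      by auto
  qed
qed

lemma neg_fst: "negligible {z::real\<times>real. fst z = c}"
proof -
  have "(1::real, 0::real) \<in> Basis" by (simp add: Basis_prod_def)
  from negligible_standard_hyperplane[OF this, of c] show ?thesis by (simp add: inner_prod_def)
qed

lemma neg_snd: "negligible {z::real\<times>real. snd z = c}"
proof -
  have "(0::real, 1::real) \<in> Basis" by (simp add: Basis_prod_def)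
  from negligible_standard_hyperplane[OF this, of c] show ?thesis by (simp add: inner_prod_def)
qed

lemma mem_cbox_pair: "(z::real\<times>real) \<in> cbox (p,q) (r,s) \<longleftrightarrow> p \<le> fst z \<and> fst z \<le> r \<and> q \<le> snd z \<and> snd z \<le> s"
  by (cases z) (auto simp add: cbox_interval)

lemma mem_crect: "(z::real\<times>real) \<in> centered_rect a b \<longleftrightarrow> \<bar>fst z\<bar> \<le> a/2 \<and> \<bar>snd z\<bar> \<le> b/2"
  by (cases z) (auto simp: centered_rect_def abs_le_iff)

lemma A_int:
  assumes al: "0 < al" "al \<le> a" "a - al \<le> b" and b: "0 < b" and be: "b \<le> be"
  shows "((\<lambda>z. dinf z (frontier (centered_rect a b))) has_integral
           (2 * (b * ((a-al)/2)^2/2 - ((a-al)/2)^3/3))) (centered_rect a b - centered_rect al be)"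
proof -
  let ?d = "\<lambda>z. dinf z (frontier (centered_rect a b))"
  let ?I = "b * ((a-al)/2)^2/2 - ((a-al)/2)^3/3"
  have a: "0 < a" using al by simp
  have h1: "(?d has_integral ?I) (cbox (al/2, -b/2) (a/2, b/2))"
  proof (rule has_integral_eq[OF _ P1_int[OF al]])
    fix z :: "real \<times> real" assume "z \<in> cbox (al/2, -b/2) (a/2, b/2)"
    moreover obtain u v where z: "z = (u,v)" by (cases z)
    ultimately have "al/2 \<le> u" "u \<le> a/2" "-b/2 \<le> v" "v \<le> b/2" by (simp_all add: mem_cbox_pair)
    then have "\<bar>u\<bar> \<le> a/2" "\<bar>v\<bar> \<le> b/2" using al by (auto simp: abs_le_iff)
    then show "phi a b z = ?d z" using dinf_in[OF a b] z by (simp add: phi_def)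
  qed
  have h2: "(?d has_integral ?I) (cbox (-a/2, -b/2) (-al/2, b/2))"
  proof (rule has_integral_eq[OF _ P2_int[OF al]])
    fix z :: "real \<times> real" assume "z \<in> cbox (-a/2, -b/2) (-al/2, b/2)"
    moreover obtain u v where z: "z = (u,v)" by (cases z)
    ultimately have "-a/2 \<le> u" "u \<le> -al/2" "-b/2 \<le> v" "v \<le> b/2" by (simp_all add: mem_cbox_pair)
    then have "\<bar>u\<bar> \<le> a/2" "\<bar>v\<bar> \<le> b/2" using al by (auto simp: abs_le_iff)
    then show "phi a b z = ?d z" using dinf_in[OF a b] z by (simp add: phi_def)
  qed
  have h12: "(?d has_integral (?I + ?I)) (cbox (al/2, -b/2) (a/2, b/2) \<union> cbox (-a/2, -b/2) (-al/2, b/2))"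
  proof (rule has_integral_Un[OF h1 h2])
    have "(cbox (al/2, -b/2) (a/2, b/2) \<inter> cbox (-a/2, -b/2) (-al/2, b/2)) = {}" using al by (auto simp: mem_cbox_pair)
    then show "negligible (cbox (al/2, -b/2) (a/2, b/2) \<inter> cbox (-a/2, -b/2) (-al/2, b/2))" by simp
  qed
  show ?thesis
  proof (subst has_integral_spike_set_eq)
    show "(?d has_integral 2 * ?I) (cbox (al/2, -b/2) (a/2, b/2) \<union> cbox (-a/2, -b/2) (-al/2, b/2))"
      using h12 by (simp only: mult_2)
    have "{x \<in> cbox (al/2, -b/2) (a/2, b/2) \<union> cbox (-a/2, -b/2) (-al/2, b/2) - (centered_rect a b - centered_rect al be). ?d x \<noteq> 0}
       \<subseteq> {z. fst z = al/2} \<union> {z. fst z = -al/2}"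
      using al be by (auto simp: mem_cbox_pair mem_crect abs_le_iff)
    then show "negligible {x \<in> cbox (al/2, -b/2) (a/2, b/2) \<union> cbox (-a/2, -b/2) (-al/2, b/2) - (centered_rect a b - centered_rect al be). ?d x \<noteq> 0}"
      by (rule negligible_subset[rotated]) (intro negligible_Un neg_fst)
    have "{x \<in> (centered_rect a b - centered_rect al be) - (cbox (al/2, -b/2) (a/2, b/2) \<union> cbox (-a/2, -b/2) (-al/2, b/2)). ?d x \<noteq> 0} = {}" (is "?E = {}")
      using al be by (auto simp: mem_cbox_pair mem_crect abs_le_iff)
    then show "negligible {x \<in> (centered_rect a b - centered_rect al be) - (cbox (al/2, -b/2) (a/2, b/2) \<union> cbox (-a/2, -b/2) (-al/2, b/2)). ?d x \<noteq> 0}"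
      by (simp only: \<open>?E = {}\<close> negligible_empty)
  qed
qed

lemma B_int:
  assumes al: "0 < al" "al \<le> a" and b: "0 < b" and be: "b \<le> be"
  shows "((\<lambda>z. dinf z (frontier (centered_rect a b))) has_integral
           (2 * (al * ((be-b)/2)^2/2))) (centered_rect al be - centered_rect a b)"
proof -
  let ?d = "\<lambda>z. dinf z (frontier (centered_rect a b))"
  let ?I = "al * ((be-b)/2)^2/2"
  have a: "0 < a" using al by simp
  have h1: "(?d has_integral ?I) (cbox (-al/2, b/2) (al/2, be/2))"
  proof (rule has_integral_eq[OF _ P3_int[OF al(1) b be]])
    fix z :: "real \<times> real" assume "z \<in> cbox (-al/2, b/2) (al/2, be/2)"
    moreover obtain u v where z: "z = (u,v)" by (cases z)
    ultimately have "-al/2 \<le> u" "u \<le> al/2" "b/2 \<le> v" "v \<le> be/2" by (simp_all add: mem_cbox_pair)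
    then have "\<bar>u\<bar> \<le> a/2" "b/2 \<le> \<bar>v\<bar>" using al b by (auto simp: abs_le_iff abs_if)
    then show "psi b z = ?d z" using dinf_out[OF a b] z by (simp add: psi_def)
  qed
  have h2: "(?d has_integral ?I) (cbox (-al/2, -be/2) (al/2, -b/2))"
  proof (rule has_integral_eq[OF _ P4_int[OF al(1) b be]])
    fix z :: "real \<times> real" assume "z \<in> cbox (-al/2, -be/2) (al/2, -b/2)"
    moreover obtain u v where z: "z = (u,v)" by (cases z)
    ultimately have "-al/2 \<le> u" "u \<le> al/2" "-be/2 \<le> v" "v \<le> -b/2" by (simp_all add: mem_cbox_pair)
    then have "\<bar>u\<bar> \<le> a/2" "b/2 \<le> \<bar>v\<bar>" using al b by (auto simp: abs_le_iff abs_if)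
    then show "psi b z = ?d z" using dinf_out[OF a b] z by (simp add: psi_def)
  qed
  have h12: "(?d has_integral (?I + ?I)) (cbox (-al/2, b/2) (al/2, be/2) \<union> cbox (-al/2, -be/2) (al/2, -b/2))"
  proof (rule has_integral_Un[OF h1 h2])
    have "(cbox (-al/2, b/2) (al/2, be/2) \<inter> cbox (-al/2, -be/2) (al/2, -b/2)) = {}" using b by (auto simp: mem_cbox_pair)
    then show "negligible (cbox (-al/2, b/2) (al/2, be/2) \<inter> cbox (-al/2, -be/2) (al/2, -b/2))" by simp
  qed
  show ?thesis
  proof (subst has_integral_spike_set_eq)
    show "(?d has_integral 2 * ?I) (cbox (-al/2, b/2) (al/2, be/2) \<union> cbox (-al/2, -be/2) (al/2, -b/2))"
      using h12 by (simp only: mult_2)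
    have "{x \<in> cbox (-al/2, b/2) (al/2, be/2) \<union> cbox (-al/2, -be/2) (al/2, -b/2) - (centered_rect al be - centered_rect a b). ?d x \<noteq> 0}
       \<subseteq> {z. snd z = b/2} \<union> {z. snd z = -b/2}"
      using al b be by (auto simp: mem_cbox_pair mem_crect abs_le_iff)
    then show "negligible {x \<in> cbox (-al/2, b/2) (al/2, be/2) \<union> cbox (-al/2, -be/2) (al/2, -b/2) - (centered_rect al be - centered_rect a b). ?d x \<noteq> 0}"
      by (rule negligible_subset[rotated]) (intro negligible_Un neg_snd)
    have "{x \<in> (centered_rect al be - centered_rect a b) - (cbox (-al/2, b/2) (al/2, be/2) \<union> cbox (-al/2, -be/2) (al/2, -b/2)). ?d x \<noteq> 0} = {}" (is "?E = {}")
      using al b be by (auto simp: mem_cbox_pair mem_crect abs_le_iff)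
    then show "negligible {x \<in> (centered_rect al be - centered_rect a b) - (cbox (-al/2, b/2) (al/2, be/2) \<union> cbox (-al/2, -be/2) (al/2, -b/2)). ?d x \<noteq> 0}"
      by (simp only: \<open>?E = {}\<close> negligible_empty)
  qed
qed

lemma crect_borel: "centered_rect a b \<in> sets borel"
  unfolding centered_rect_cbox by (simp add: borel_closed)

lemma Dist_decomp:
  assumes al: "0 < al" "al \<le> a" and b: "0 < b" and be: "b \<le> be"
  shows "Dist (centered_rect al be) (centered_rect a b) =
     (al * ((be-b)/2)^2) + (LINT z:(centered_rect a b - centered_rect al be)|lborel. dinf z (frontier (centered_rect a b)))"
    and "0 \<le> (LINT z:(centered_rect a b - centered_rect al be)|lborel. dinf z (frontier (centered_rect a b)))"
    and "a - al \<le> b \<Longrightarrow> (LINT z:(centered_rect a b - centered_rect al be)|lborel. dinf z (frontier (centered_rect a b)))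
          = 2 * (b * ((a-al)/2)^2/2 - ((a-al)/2)^3/3)"
proof -
  let ?d = "\<lambda>z. dinf z (frontier (centered_rect a b))"
  let ?R = "centered_rect a b" and ?Q = "centered_rect al be"
  have a: "0 < a" using al by simp
  have cont: "continuous_on UNIV ?d" by (rule dinf_cont[OF frontier_ne[OF a b]])
  have iA: "set_integrable lborel (?R - ?Q) ?d"
    by (rule si[OF _ _ cont, of _ "(-a/2, -b/2)" "(a/2, b/2)"])
       (use Diff_subset[of ?R ?Q] crect_borel in \<open>auto simp: centered_rect_cbox\<close>)
  have iB: "set_integrable lborel (?Q - ?R) ?d"
    by (rule si[OF _ _ cont, of _ "(-al/2, -be/2)" "(al/2, be/2)"])
       (use Diff_subset[of ?Q ?R] crect_borel in \<open>auto simp: centered_rect_cbox\<close>)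
  have "Dist ?Q ?R = (LINT z:(?Q - ?R)|lborel. ?d z) + (LINT z:(?R - ?Q)|lborel. ?d z)"
    unfolding Dist_def by (rule set_integral_Un[OF _ iB iA]) auto
  moreover have "(LINT z:(?Q - ?R)|lborel. ?d z) = integral (?Q - ?R) ?d"
    by (rule set_borel_integral_eq_integral(2)[OF iB])
  moreover have "integral (?Q - ?R) ?d = 2 * (al * ((be-b)/2)^2/2)"
    by (rule integral_unique[OF B_int[OF al b be]])
  ultimately show "Dist ?Q ?R = (al * ((be-b)/2)^2) + (LINT z:(?R - ?Q)|lborel. ?d z)"
    by simp
  show "0 \<le> (LINT z:(?R - ?Q)|lborel. ?d z)"
    unfolding set_lebesgue_integral_def
    by (rule integral_nonneg_AE) (auto intro!: AE_I2 mult_nonneg_nonneg dinf_nonneg[OF frontier_ne[OF a b]])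
  assume "a - al \<le> b"
  have "(LINT z:(?R - ?Q)|lborel. ?d z) = integral (?R - ?Q) ?d"
    by (rule set_borel_integral_eq_integral(2)[OF iA])
  also have "\<dots> = 2 * (b * ((a-al)/2)^2/2 - ((a-al)/2)^3/3)"
    by (rule integral_unique[OF A_int[OF al \<open>a - al \<le> b\<close> b be]])
  finally show "(LINT z:(?R - ?Q)|lborel. ?d z) = 2 * (b * ((a-al)/2)^2/2 - ((a-al)/2)^3/3)" .
qed

lemma Dist_nonneg:
  assumes "0 < a" "0 < b"
  shows "0 \<le> Dist S (centered_rect a b)"
  unfolding Dist_def set_lebesgue_integral_def
  by (rule integral_nonneg_AE) (auto intro!: AE_I2 mult_nonneg_nonneg dinf_nonneg[OF frontier_ne[OF assms]])

lemma box_eq: "{x1..x2} \<times> {y1..y2} = cbox (x1::real, y1::real) (x2, y2)"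
  by (auto simp: mem_cbox_pair)

lemma content_ival: "(x1::real) \<le> x2 \<Longrightarrow> measure lborel (cbox x1 x2) = x2 - x1"
  by (metis interval_cbox content_real)

lemma hi_val: "(f has_integral I) S \<Longrightarrow> I = J \<Longrightarrow> (f has_integral J) S"
  by simp

lemma measure_box:
  fixes x1 x2 y1 y2 :: real
  assumes "x1 \<le> x2" "y1 \<le> y2"
  shows "measure lborel ({x1..x2} \<times> {y1..y2}) = (x2 - x1) * (y2 - y1)"
  unfolding box_eq using content_Pair[of x1 y1 x2 y2] assms by (simp add: content_ival)

lemma bar_fst:
  fixes x1 x2 y1 y2 :: real
  assumes "x1 \<le> x2" "y1 \<le> y2"
  shows "(LINT z:({x1..x2} \<times> {y1..y2})|lborel. fst z) = (x2^2 - x1^2)/2 * (y2 - y1)"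
proof -
  have i: "set_integrable lborel ({x1..x2} \<times> {y1..y2}) fst"
    by (rule si[of _ "(x1,y1)" "(x2,y2)"]) (auto simp: box_eq intro: continuous_intros)
  have "(fst has_integral ((x2^2 - x1^2)/2 * (y2 - y1))) (cbox (x1,y1) (x2,y2))"
  proof (rule prod_int[where g="\<lambda>u. u * (y2 - y1)"])
    show "continuous_on (cbox (x1, y1) (x2, y2)) fst" by (intro continuous_intros)
    fix u show "((\<lambda>v. fst (u, v)) has_integral u * (y2 - y1)) {y1..y2}"
      using has_integral_const_real[of u y1 y2] assms by (simp add: mult.commute)
  next
    show "((\<lambda>u. u * (y2 - y1)) has_integral (x2^2 - x1^2)/2 * (y2 - y1)) {x1..x2}"
      apply (rule hi_val[OF ftc_real[OF assms(1), where F="\<lambda>u. u^2/2 * (y2 - y1)"]])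
      subgoal by (auto intro!: derivative_eq_intros; (simp add: field_simps power2_eq_square; algebra)?)
      subgoal by (simp add: left_diff_distrib diff_divide_distrib)
      done
  qed
  then show ?thesis
    using set_borel_integral_eq_integral(2)[OF i] integral_unique by (metis box_eq)
qed

lemma bar_snd:
  fixes x1 x2 y1 y2 :: real
  assumes "x1 \<le> x2" "y1 \<le> y2"
  shows "(LINT z:({x1..x2} \<times> {y1..y2})|lborel. snd z) = (y2^2 - y1^2)/2 * (x2 - x1)"
proof -
  have i: "set_integrable lborel ({x1..x2} \<times> {y1..y2}) snd"
    by (rule si[of _ "(x1,y1)" "(x2,y2)"]) (auto simp: box_eq intro: continuous_intros)
  have "(snd has_integral ((y2^2 - y1^2)/2 * (x2 - x1))) (cbox (x1,y1) (x2,y2))"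
  proof (rule prod_int[where g="\<lambda>u. (y2^2 - y1^2)/2"])
    show "continuous_on (cbox (x1, y1) (x2, y2)) snd" by (intro continuous_intros)
    fix u 
    have "((\<lambda>v. v) has_integral ((\<lambda>v. v^2/2) y2 - (\<lambda>v. v^2/2) y1)) {y1..y2}"
      by (rule ftc_real[OF assms(2)]) (auto intro!: derivative_eq_intros simp: power2_eq_square)
    then show "((\<lambda>v. snd (u, v)) has_integral (y2^2 - y1^2)/2) {y1..y2}"
      by (simp add: diff_divide_distrib)
  next
    show "((\<lambda>u. (y2^2 - y1^2)/2) has_integral (y2^2 - y1^2)/2 * (x2 - x1)) {x1..x2}"
      using has_integral_const_real[of "(y2^2 - y1^2)/2" x1 x2] assms by (simp add: mult.commute)
  qed
  then show ?thesis
    using set_borel_integral_eq_integral(2)[OF i] integral_unique by (metis box_eq)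
qed

lemma adm_iff: "admissible S \<longleftrightarrow> (\<exists>al>0. S = centered_rect al (1/al))"
proof
  assume "admissible S"
  then obtain x1 x2 y1 y2 where r: "x1 < x2" "y1 < y2" "S = {x1..x2} \<times> {y1..y2}"
    and m: "measure lborel S = 1" and bar: "Bar S = (0,0)"
    unfolding admissible_def is_rect_def by blast
  have "(x2^2 - x1^2)/2 * (y2 - y1) = 0" "(y2^2 - y1^2)/2 * (x2 - x1) = 0"
    using bar bar_fst[of x1 x2 y1 y2] bar_snd[of x1 x2 y1 y2] r unfolding Bar_def by auto
  then have "x2^2 = x1^2" "y2^2 = y1^2" using r by auto
  then have "x1 = -x2" "y1 = -y2" using r by (auto simp: power2_eq_iff)
  moreover have "(x2 - x1) * (y2 - y1) = 1" using m measure_box[of x1 x2 y1 y2] r by simp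
  ultimately have "(x2 - x1)/2 = x2" "(1/(x2 - x1))/2 = y2" "x2 - x1 > 0"
    using r by (auto simp: field_simps)
  then have "S = centered_rect (x2 - x1) (1/(x2 - x1))" "x2 - x1 > 0"
    using r \<open>x1 = -x2\<close> \<open>y1 = -y2\<close> unfolding centered_rect_def by (simp_all only:) simp_all
  then show "\<exists>al>0. S = centered_rect al (1/al)" by blast
next
  assume "\<exists>al>0. S = centered_rect al (1/al)"
  then obtain al where al: "al > 0" "S = centered_rect al (1/al)" by blast
  have "is_rect S" unfolding is_rect_def centered_rect_def al
    by (rule exI[of _ "-al/2"], rule exI[of _ "al/2"], rule exI[of _ "-(1/al)/2"], rule exI[of _ "(1/al)/2"]) (use al in auto)
  moreover have "measure lborel S = 1" unfolding al centered_rect_def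
    using measure_box[of "-al/2" "al/2" "-(1/al)/2" "(1/al)/2"] al by simp
  moreover have "Bar S = (0,0)" unfolding al centered_rect_def Bar_def
    using bar_fst[of "-al/2" "al/2" "-(1/al)/2" "(1/al)/2"] bar_snd[of "-al/2" "al/2" "-(1/al)/2" "(1/al)/2"] al
    by simp
  ultimately show "admissible S" unfolding admissible_def by blast
qed

lemma perim_crect:
  assumes "0 < al" "0 < be"
  shows "perim1_rect (centered_rect al be) = 2 * al + 2 * be"
  using assms unfolding perim1_rect_def centered_rect_def by simp

definition Gf :: "real \<Rightarrow> real \<Rightarrow> real \<Rightarrow> real \<Rightarrow> real" where
  "Gf a b t x = 2*(a-2*x) + 2/(a-2*x) + (b*x^2 - 2*x^3/3 + b^2*x^2/(a-2*x))/t"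

definition Gd :: "real \<Rightarrow> real \<Rightarrow> real \<Rightarrow> real \<Rightarrow> real" where
  "Gd a b t x = -4 + 4/(a-2*x)^2 + (2*b*x - 2*x^2 + (1/(a-2*x)^2 - b^2)/2)/t"

lemma Gf_deriv:
  assumes ab: "a * b = 1" and x: "x < a/2" and t: "t \<noteq> 0"
  shows "(Gf a b t has_real_derivative Gd a b t x) (at x)"
proof -
  have ne: "a - 2*x \<noteq> 0" using x by simp
  have key: "b^2 * (2*x*(a-2*x) + 2*x^2) / (a-2*x)^2 = (1/(a-2*x)^2 - b^2)/2"
  proof -
    have "b^2 * (2*x*(a-2*x) + 2*x^2) = 2*b*x*(a*b) - 2*b^2*x^2" by (simp add: algebra_simps power2_eq_square)
    also have "\<dots> = 2*b*x - 2*b^2*x^2" using ab by simp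
    also have "\<dots> = (1 - (b*(a-2*x))^2)/2"
    proof -
      have "b*(a-2*x) = 1 - 2*b*x" using ab by (simp add: algebra_simps)
      then show ?thesis by (simp add: power2_eq_square field_simps)
    qed
    finally have e: "b^2 * (2*x*(a-2*x) + 2*x^2) = (1 - (b*(a-2*x))^2)/2" .
    have "(1 - (b*(a-2*x))^2)/2/(a-2*x)^2 = (1/(a-2*x)^2 - b^2)/2"
      unfolding power_mult_distrib using ne by (simp add: field_simps)
    then show ?thesis unfolding e .
  qed
  have "(Gf a b t has_real_derivative
      (-4 + 4/(a-2*x)^2 + (2*b*x - 2*x^2 + b^2 * (2*x*(a-2*x) + 2*x^2) / (a-2*x)^2)/t)) (at x)"
  proof -
    have d1: "((\<lambda>x. 2*(a-2*x)) has_real_derivative -4) (at x)"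
      by (rule derivative_eq_intros refl)+ simp
    have d2: "((\<lambda>x. 2/(a-2*x)) has_real_derivative 4/(a-2*x)^2) (at x)"
      apply (rule derivative_eq_intros refl)+
      using ne by (auto simp: power2_eq_square)
    have d3: "((\<lambda>x. b*x^2 - 2*x^3/3) has_real_derivative 2*b*x - 2*x^2) (at x)"
      apply (rule derivative_eq_intros refl)+
      by (auto simp: power2_eq_square)
    have d4: "((\<lambda>x. b^2*x^2/(a-2*x)) has_real_derivative b^2 * (2*x*(a-2*x) + 2*x^2) / (a-2*x)^2) (at x)"
      apply (rule derivative_eq_intros refl)+
      using ne by (auto simp: power2_eq_square algebra_simps)
    show ?thesis unfolding Gf_def[abs_def]
      by (intro DERIV_add DERIV_cdivide d1 d2 d3 d4)
  qed
  then show ?thesis unfolding Gd_def key .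
qed

lemma inv_sq_lower:
  fixes u :: real assumes "0 \<le> u" "u \<le> 1/8"
  shows "1 + 4*u \<le> 1/(1-2*u)^2"
proof -
  have q: "0 < (1-2*u)^2" using assms by simp
  have "(1 + 4*u) * (1-2*u)^2 = 1 - u^2 * (12 - 16*u)" by (simp add: power2_eq_square algebra_simps)
  also have "\<dots> \<le> 1" using assms by simp
  finally show ?thesis using q by (simp add: le_divide_eq)
qed

lemma inv_sq_upper:
  fixes u :: real assumes "0 \<le> u" "u \<le> 1/8"
  shows "1/(1-2*u)^2 \<le> 1 + 4*u + 20*u^2"
proof -
  have q: "0 < (1-2*u)^2" using assms by simp
  have "(1 + 4*u + 20*u^2) * (1-2*u)^2 = 1 + u^2 * (8 - 64*u) + 80*u^4"
    by (simp add: power2_eq_square power4_eq_xxxx algebra_simps)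
  moreover have "0 \<le> u^2 * (8 - 64*u)" using assms by simp
  moreover have "0 \<le> 80*u^4" by simp
  ultimately have "1 \<le> (1 + 4*u + 20*u^2) * (1-2*u)^2" by linarith
  then show ?thesis using q by (simp add: divide_le_eq)
qed

lemma w_bounds:
  fixes a b x :: real
  assumes ab: "a * b = 1" and b: "0 < b" "b \<le> 1" and x: "0 \<le> x" "x \<le> b/8"
  shows "4*b^3*x \<le> 1/(a-2*x)^2 - b^2" "1/(a-2*x)^2 - b^2 \<le> 4*b^3*x + 20*x^2"
proof -
  define u where "u = b*x"
  have u: "0 \<le> u" "u \<le> 1/8" using b x unfolding u_def
    by (simp_all add: mult_nonneg_nonneg) (metis (no_types) mult_left_le order_trans b(1) less_imp_le
        mult.commute mult_right_mono x(1) x(2) le_divide_eq_numeral1(1) mult_le_one zero_le_numeral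
        zero_less_numeral le_numeral_extra(1) divide_le_eq_1)
  have a: "a = 1/b" using ab b by (simp add: field_simps)
  have "a - 2*x = (1 - 2*u)/b" unfolding a u_def using b by (simp add: field_simps)
  then have e: "1/(a-2*x)^2 = b^2 * (1/(1-2*u)^2)" using b by (simp add: power_divide)
  have "4*b^3*x = b^2 * (4*u)" unfolding u_def by (simp add: power2_eq_square power3_eq_cube)
  also have "\<dots> \<le> b^2 * (1/(1-2*u)^2 - 1)"
    using inv_sq_lower[OF u] by (intro mult_left_mono) auto
  also have "\<dots> = 1/(a-2*x)^2 - b^2" unfolding e by (simp add: algebra_simps)
  finally show "4*b^3*x \<le> 1/(a-2*x)^2 - b^2" .
  have "1/(a-2*x)^2 - b^2 = b^2 * (1/(1-2*u)^2 - 1)" unfolding e by (simp add: algebra_simps)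
  also have "\<dots> \<le> b^2 * (4*u + 20*u^2)"
    using inv_sq_upper[OF u] by (intro mult_left_mono) auto
  also have "\<dots> = 4*b^3*x + 20*b^4*x^2" unfolding u_def by (simp add: power2_eq_square power3_eq_cube power4_eq_xxxx algebra_simps)
  also have "\<dots> \<le> 4*b^3*x + 20*x^2"
  proof -
    have "b^4 \<le> 1" using b by (simp add: power_le_one)
    then have "b^4 * x^2 \<le> x^2" by (simp add: mult_left_le_one_le)
    then show ?thesis by simp
  qed
  finally show "1/(a-2*x)^2 - b^2 \<le> 4*b^3*x + 20*x^2" .
qed

lemma Gd_mono:
  fixes a b t x y :: real
  assumes b: "0 < b" "b \<le> a" and t: "0 < t" and xy: "0 \<le> x" "x < y" "y \<le> b/8"
  shows "Gd a b t x < Gd a b t y"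
proof -
  have T: "0 < a - 2*y" "a - 2*y < a - 2*x" using b xy by auto
  have i: "1/(a-2*x)^2 < 1/(a-2*y)^2"
    using T by (intro divide_strict_left_mono power_strict_mono) auto
  have p: "2*b*x - 2*x^2 < 2*b*y - 2*y^2"
  proof -
    have "(2*b*y - 2*y^2) - (2*b*x - 2*x^2) = 2*(y-x)*(b-x-y)" by (simp add: power2_eq_square algebra_simps)
    moreover have "0 < 2*(y-x)*(b-x-y)" using xy b by (intro mult_pos_pos) auto
    ultimately show ?thesis by linarith
  qed
  have "(2*b*x - 2*x^2 + (1/(a-2*x)^2 - b^2)/2)/t < (2*b*y - 2*y^2 + (1/(a-2*y)^2 - b^2)/2)/t"
  proof (intro divide_strict_right_mono t)
    have "(1/(a-2*x)^2 - b^2)/2 < (1/(a-2*y)^2 - b^2)/2" using i by (simp add: divide_strict_right_mono)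
    then show "2*b*x - 2*x^2 + (1/(a-2*x)^2 - b^2)/2 < 2*b*y - 2*y^2 + (1/(a-2*y)^2 - b^2)/2"
      by (rule add_strict_mono[OF p])
  qed
  then show ?thesis unfolding Gd_def using i by linarith
qed

lemma Gd_cont: "t \<noteq> 0 \<Longrightarrow> c < a/2 \<Longrightarrow> continuous_on {0..c} (Gd a b t)"
  unfolding Gd_def by (intro continuous_intros) auto

lemma Gf_cont: "t \<noteq> 0 \<Longrightarrow> c < a/2 \<Longrightarrow> continuous_on {d..c} (Gf a b t)"
  unfolding Gf_def by (intro continuous_intros) auto

lemma tGd_identity:
  fixes a b t x :: real
  assumes t: "0 < t" and b: "0 < b"
  defines "x0 \<equiv> 2*t*(1-b^2)/(b*(1+b^2))"
  defines "w \<equiv> 1/(a-2*x)^2 - b^2"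
  shows "t * Gd a b t x = 2*b*(1+b^2)*(x - x0) + (4*t*w - 2*x^2 + (w - 4*b^3*x)/2)"
proof -
  have "0 < 1 + b^2" by (simp add: add_pos_nonneg)
  then have bb: "b*(1+b^2) \<noteq> 0" using b by simp
  have "2*b*(1+b^2)*x0 = 4*t*(1-b^2)" unfolding x0_def using bb by (simp add: field_simps)
  moreover have "t * Gd a b t x = -4*t + 4*t*(w + b^2) + 2*b*x - 2*x^2 + w/2"
    unfolding Gd_def w_def using t by (simp add: field_simps)
  ultimately show ?thesis by algebra
qed

lemma lin1:
  fixes G M T X W m P Q :: real
  shows "G = M + (T - 2*X + (W - m)/2) \<Longrightarrow> m \<le> W \<Longrightarrow> 0 \<le> T \<Longrightarrow> 2*P \<le> M \<Longrightarrow> 100*Q < P \<Longrightarrow> X \<le> 9*Q \<Longrightarrow> 0 \<le> Q \<Longrightarrow> 0 < G"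
  by argo

lemma lin2:
  fixes G M T X W m P Q T1 T2 Y :: real
  shows "G = -M + (T - 2*X + (W - m)/2) \<Longrightarrow> W \<le> m + 20*X \<Longrightarrow> T \<le> T1 \<Longrightarrow> T1 \<le> T2 \<Longrightarrow> X \<le> Y
    \<Longrightarrow> 2*P \<le> M \<Longrightarrow> 100*Q < P \<Longrightarrow> T2 \<le> 64*Q \<Longrightarrow> Y = 4*Q \<Longrightarrow> 0 \<le> Q \<Longrightarrow> G < 0"
  by argo

lemma one_d:
  fixes a b t L :: real
  assumes ab: "a*b = 1" and b: "0 < b" "b \<le> a" and L: "3 \<le> L" "a < L"
    and t: "0 < t" "t < 1/(1000*L^6)"
  shows "\<exists>xs. 0 \<le> xs \<and> xs \<le> (2*L+1)*t \<and> xs \<le> b/8 \<and>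
     \<bar>xs - 2*t*(1-b^2)/(b*(1+b^2))\<bar> \<le> 100*L^3*t^2 \<and>
     (\<forall>x. 0 \<le> x \<and> x \<le> b/8 \<and> x \<noteq> xs \<longrightarrow> Gf a b t xs < Gf a b t x)"
proof -
  define x0 where "x0 = 2*t*(1-b^2)/(b*(1+b^2))"
  define K where "K = 100*L^3"
  define \<delta> where "\<delta> = K*t^2"
  define xr where "xr = x0 + \<delta>"
  define xl where "xl = x0 - \<delta>"
  have Lpos: "0 < L" using L by simp
  have b1: "b \<le> 1"
  proof -
    have "b*b \<le> a*b" using b by (simp add: mult_right_mono)
    then have "b*b \<le> 1" using ab by simp
    show ?thesis
    proof (rule ccontr)
      assume "\<not> b \<le> 1"
      then have "1*1 < b*b" by (intro mult_strict_mono) auto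
      with \<open>b*b \<le> 1\<close> show False by simp
    qed
  qed
  have bL: "1 < b*L"
  proof -
    have "a*b < L*b" using L b by simp
    then show ?thesis using ab by (simp add: mult.commute)
  qed
  have a_pos: "0 < a" using b by simp
  have ainv: "1/b = a" using ab b by (simp add: field_simps)
  have f1: "1000*L^6*t < 1" using t Lpos by (simp add: field_simps)
  have L3: "1 \<le> L^3" using L by (simp add: one_le_power)
  have L6: "L^3 \<le> L^6"
  proof -
    have "L^6 = L^3 * L^3" by (simp add: power_add[symmetric])
    moreover have "L^3 * 1 \<le> L^3 * L^3" using L3 Lpos by (intro mult_left_mono) auto
    ultimately show ?thesis by simp
  qed
  have Kt: "K*t \<le> 1"
  proof -
    have "K*t = 100*L^3*t" unfolding K_def by simp
    also have "\<dots> \<le> 1000*L^6*t" using L6 L3 t by (intro mult_right_mono) auto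
    finally show ?thesis using f1 by simp
  qed
  have f3: "24*L^2*t \<le> 1"
  proof -
    have "L^2 \<le> L^6" using L by (intro power_increasing) auto
    moreover have "0 \<le> L^2" by simp
    ultimately have "24*L^2 \<le> 1000*L^6" by linarith
    then have "24*L^2*t \<le> 1000*L^6*t" using t by (intro mult_right_mono) auto
    then show ?thesis using f1 by linarith
  qed
  have x0_nn: "0 \<le> x0"
  proof -
    have "b^2 \<le> 1" using b b1 by (simp add: power_le_one)
    moreover have "0 < b*(1+b^2)" using b by (simp add: add_pos_nonneg)
    ultimately show ?thesis unfolding x0_def using t by simp
  qed
  have x0_le: "x0 \<le> 2*L*t"
  proof -
    have q: "(1-b^2)/(1+b^2) \<le> 1" by (simp add: add_pos_nonneg)
    have "x0 = (2*t/b) * ((1-b^2)/(1+b^2))" unfolding x0_def by (simp add: field_simps)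
    also have "\<dots> \<le> 2*t/b" using q t b by (intro mult_left_le) auto
    also have "\<dots> = 2*t*a" using ainv by (simp add: divide_inverse)
    also have "\<dots> \<le> 2*t*L" using L t by simp
    also have "\<dots> = 2*L*t" by simp
    finally show ?thesis .
  qed
  have \<delta>_nn: "0 \<le> \<delta>" unfolding \<delta>_def K_def using Lpos by simp
  have p1: "2*(b*\<delta>) \<le> 2*b*(1+b^2)*\<delta>"
  proof -
    have "2*b*(1+b^2)*\<delta> = 2*(b*\<delta>) + 2*b^3*\<delta>" by (simp add: algebra_simps power2_eq_square power3_eq_cube)
    moreover have "0 \<le> 2*b^3*\<delta>" using b \<delta>_nn by simp
    ultimately show ?thesis by linarith
  qed
  have p2: "100*(L^2*t^2) < b*\<delta>"
  proof -
    have e: "b*\<delta> = (100*L^2*t^2) * (b*L)" unfolding \<delta>_def K_def by (simp add: power2_eq_square power3_eq_cube)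
    have pos: "0 < 100*L^2*t^2" using Lpos t by simp
    show ?thesis unfolding e using mult_strict_left_mono[OF bL pos] by simp
  qed
  have \<delta>_le: "\<delta> \<le> t" unfolding \<delta>_def using Kt t by (simp add: power2_eq_square mult_left_le_one_le mult.assoc[symmetric])
  have xr_le: "xr \<le> 3*L*t"
  proof -
    have "1*t \<le> L*t" using L t by (intro mult_right_mono) auto
    moreover have "2*L*t + L*t = 3*L*t" by (simp add: algebra_simps)
    ultimately show ?thesis unfolding xr_def using x0_le \<delta>_le by linarith
  qed
  have xr_nn: "0 \<le> xr" unfolding xr_def using x0_nn \<delta>_nn by simp
  have xr_b: "xr < b/8"
  proof -
    have "24*L*t < b"
    proof -
      have "24*L*t * L \<le> 1" using f3 by (simp add: power2_eq_square algebra_simps)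
      also have "1 < b * L" by (rule bL)
      finally show ?thesis using Lpos by (simp add: algebra_simps)
    qed
    then show ?thesis using xr_le by simp
  qed
  have bha: "b/8 < a/2" using b by simp
  have Gd_xr: "0 < Gd a b t xr"
  proof -
    have wb: "4*b^3*xr \<le> 1/(a-2*xr)^2 - b^2"
      by (rule w_bounds(1)[OF ab b(1) b1 xr_nn]) (use xr_b in simp)
    have "0 \<le> 4*b^3*xr" using b xr_nn by simp
    then have "0 \<le> 1/(a-2*xr)^2 - b^2" using wb by linarith
    then have tw: "0 \<le> 4*t*(1/(a-2*xr)^2 - b^2)"
      using t by simp
    have p3: "xr^2 \<le> 9*(L^2*t^2)"
    proof -
      have "xr^2 \<le> (3*L*t)^2" using xr_le xr_nn by (intro power_mono) auto
      then show ?thesis by (simp add: power_mult_distrib)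
    qed
    have "t * Gd a b t xr = 2*b*(1+b^2)*(xr - x0) + (4*t*(1/(a-2*xr)^2 - b^2) - 2*xr^2 + ((1/(a-2*xr)^2 - b^2) - 4*b^3*xr)/2)"
      using tGd_identity[OF t(1) b(1), of a xr] unfolding x0_def by simp
    also have "xr - x0 = \<delta>" unfolding xr_def by simp
    finally have "t * Gd a b t xr = 2*b*(1+b^2)*\<delta> + (4*t*(1/(a-2*xr)^2 - b^2) - 2*xr^2 + ((1/(a-2*xr)^2 - b^2) - 4*b^3*xr)/2)" .
    moreover have "0 \<le> L^2*t^2" by simp
    ultimately have "0 < t * Gd a b t xr" by (rule lin1[OF _ wb tw p1 p2 p3])
    then show ?thesis using t by (simp add: zero_less_mult_iff)
  qed
  have Gd0: "Gd a b t 0 \<le> 0"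
  proof -
    have "1/a = b" using ainv[symmetric] by simp
    then have "1/a^2 = b^2" by (metis power_one_over)
    then have "Gd a b t 0 = -4 + 4*b^2" unfolding Gd_def by simp
    also have "\<dots> \<le> 0" using b b1 by (simp add: power_le_one)
    finally show ?thesis .
  qed
  have contGd: "continuous_on {0..xr} (Gd a b t)"
    by (rule Gd_cont) (use t xr_b bha in auto)
  obtain xs where xs: "0 \<le> xs" "xs \<le> xr" "Gd a b t xs = 0"
    using IVT'[of "Gd a b t" 0 0 xr, OF Gd0 less_imp_le[OF Gd_xr] xr_nn contGd] by blast
  have xs_b: "xs \<le> b/8" using xs xr_b by simp
  have xs_up: "xs \<le> x0 + \<delta>" using xs unfolding xr_def by simp
  have xs_lo: "x0 - \<delta> \<le> xs"
  proof (rule ccontr)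
    assume "\<not> x0 - \<delta> \<le> xs"
    then have lt: "xs < xl" unfolding xl_def by simp
    have xl_nn: "0 \<le> xl" using lt xs by simp
    have xl_le: "xl \<le> x0" unfolding xl_def using \<delta>_nn by simp
    have xl_b: "xl \<le> b/8" using xl_le \<delta>_nn xr_b unfolding xr_def by linarith
    have "Gd a b t xl < 0"
    proof -
      have wb: "1/(a-2*xl)^2 - b^2 \<le> 4*b^3*xl + 20*xl^2"
        by (rule w_bounds(2)[OF ab b(1) b1 xl_nn xl_b])
      have b3: "b^3 \<le> 1" using b b1 by (simp add: power_le_one)
      have xl_1: "xl \<le> 1" using xl_b b1 by simp
      have xlsq: "xl^2 \<le> xl" using xl_nn xl_1 by (simp add: power2_eq_square mult_left_le_one_le)
      have w_le: "1/(a-2*xl)^2 - b^2 \<le> 24*xl"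
      proof -
        have "b^3*xl \<le> xl" by (rule mult_left_le_one_le) (use b xl_nn b3 in auto)
        then have "4*b^3*xl \<le> 4*xl" by simp
        then show ?thesis using wb xlsq by linarith
      qed
      have q1: "4*t*(1/(a-2*xl)^2 - b^2) \<le> 4*t*(24*xl)" using w_le t by simp
      have q2: "4*t*(24*xl) \<le> 4*t*(24*(2*L*t))" using xl_le x0_le t by simp
      have q3: "xl^2 \<le> (2*L*t)^2" using xl_nn xl_le x0_le by (intro power_mono) auto
      have q6: "4*t*(24*(2*L*t)) \<le> 64*(L^2*t^2)"
      proof -
        have "4*t*(24*(2*L*t)) = 192*L*t^2" by (simp add: power2_eq_square)
        also have "\<dots> \<le> 64*(L^2*t^2)" using L t by (simp add: power2_eq_square)
        finally show ?thesis .
      qed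
      have q7: "(2*L*t)^2 = 4*(L^2*t^2)" by (simp add: power_mult_distrib)
      have "t * Gd a b t xl = 2*b*(1+b^2)*(xl - x0) + (4*t*(1/(a-2*xl)^2 - b^2) - 2*xl^2 + ((1/(a-2*xl)^2 - b^2) - 4*b^3*xl)/2)"
        using tGd_identity[OF t(1) b(1), of a xl] unfolding x0_def by simp
      also have "xl - x0 = -\<delta>" unfolding xl_def by simp
      finally have "t * Gd a b t xl = -(2*b*(1+b^2)*\<delta>) + (4*t*(1/(a-2*xl)^2 - b^2) - 2*xl^2 + ((1/(a-2*xl)^2 - b^2) - 4*b^3*xl)/2)" by simp
      moreover have "0 \<le> L^2*t^2" by simp
      ultimately have "t * Gd a b t xl < 0" by (rule lin2[OF _ wb q1 q2 q3 p1 p2 q6 q7])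
      then show ?thesis using t by (simp add: mult_less_0_iff)
    qed
    moreover have "Gd a b t xs < Gd a b t xl"
      by (rule Gd_mono[OF b t(1) xs(1) lt xl_b])
    ultimately show False using xs(3) by simp
  qed
  have strict: "\<forall>x. 0 \<le> x \<and> x \<le> b/8 \<and> x \<noteq> xs \<longrightarrow> Gf a b t xs < Gf a b t x"
  proof (intro allI impI)
    fix x assume x: "0 \<le> x \<and> x \<le> b/8 \<and> x \<noteq> xs"
    show "Gf a b t xs < Gf a b t x"
    proof (cases "xs < x")
      case True
      show ?thesis
      proof (rule DERIV_pos_imp_increasing_open[OF True])
        fix s assume s: "xs < s" "s < x"
        have "Gd a b t xs < Gd a b t s" using Gd_mono[OF b t(1) xs(1) s(1)] s x by simp
        then show "\<exists>y. (Gf a b t has_real_derivative y) (at s) \<and> 0 < y"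
          using Gf_deriv[OF ab, of s t] s x bha t xs(3) by auto
      next
        show "continuous_on {xs..x} (Gf a b t)" by (rule Gf_cont) (use x bha t in auto)
      qed
    next
      case False
      then have lt: "x < xs" using x by simp
      have "Gf a b t xs < Gf a b t x"
      proof (rule DERIV_neg_imp_decreasing_open[OF lt])
        fix s assume s: "x < s" "s < xs"
        have "Gd a b t s < Gd a b t xs" using Gd_mono[OF b t(1) _ s(2)] s x xs_b by simp
        then show "\<exists>y. (Gf a b t has_real_derivative y) (at s) \<and> y < 0"
          using Gf_deriv[OF ab, of s t] s xs_b bha t xs(3) by auto
      next
        show "continuous_on {x..xs} (Gf a b t)" by (rule Gf_cont) (use xs_b bha t in auto)
      qed
      then show ?thesis .
    qed
  qed
  have "\<bar>xs - x0\<bar> \<le> \<delta>" using xs_up xs_lo by simp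
  moreover have "xs \<le> (2*L+1)*t" using xs(2) x0_le \<delta>_le unfolding xr_def by (simp add: algebra_simps)
  ultimately show ?thesis using xs(1) xs_b strict unfolding x0_def \<delta>_def K_def by blast
qed

lemma symdiff_measure:
  fixes a b al be :: real
  assumes al: "0 < al" "al \<le> a" and b: "0 < b" "b \<le> be"
  shows "measure lborel ((centered_rect a b - centered_rect al be) \<union> (centered_rect al be - centered_rect a b))
     \<le> 2 * ((a - al)/2 * b) + 2 * (al * ((be - b)/2))"
proof -
  let ?P1 = "{al/2..a/2} \<times> {-b/2..b/2}" and ?P2 = "{-a/2..-al/2} \<times> {-b/2..b/2}"
  let ?P3 = "{-al/2..al/2} \<times> {b/2..be/2}" and ?P4 = "{-al/2..al/2} \<times> {-be/2..-b/2}"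
  have sub: "(centered_rect a b - centered_rect al be) \<union> (centered_rect al be - centered_rect a b) \<subseteq> ?P1 \<union> ?P2 \<union> ?P3 \<union> ?P4"
  proof
    fix z assume z: "z \<in> (centered_rect a b - centered_rect al be) \<union> (centered_rect al be - centered_rect a b)"
    obtain u v where zuv: "z = (u, v)" by (cases z)
    show "z \<in> ?P1 \<union> ?P2 \<union> ?P3 \<union> ?P4"
      using z al b unfolding zuv centered_rect_def by (auto simp: abs_le_iff)
  qed
  have cpt: "compact (?P1 \<union> ?P2 \<union> ?P3 \<union> ?P4)"
    by (intro compact_Un compact_Times compact_Icc)
  have "measure lborel ((centered_rect a b - centered_rect al be) \<union> (centered_rect al be - centered_rect a b))
     \<le> measure lborel (?P1 \<union> ?P2 \<union> ?P3 \<union> ?P4)"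
    by (rule measure_mono_fmeasurable[OF sub _ fmeasurable_compact[OF cpt]])
       (intro sets.Un sets.Diff, simp_all add: crect_borel)
  also have "\<dots> \<le> measure lborel (?P1 \<union> ?P2 \<union> ?P3) + measure lborel ?P4"
    by (rule measure_Un_le) (auto intro!: borel_closed closed_Times)
  also have "measure lborel (?P1 \<union> ?P2 \<union> ?P3) \<le> measure lborel (?P1 \<union> ?P2) + measure lborel ?P3"
    by (rule measure_Un_le) (auto intro!: borel_closed closed_Times)
  also have "measure lborel (?P1 \<union> ?P2) \<le> measure lborel ?P1 + measure lborel ?P2"
    by (rule measure_Un_le) (auto intro!: borel_closed closed_Times)
  also have "measure lborel ?P1 = (a - al)/2 * b"
    using measure_box[of "al/2" "a/2" "-b/2" "b/2"] al b by (simp add: field_simps)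
  also have "measure lborel ?P2 = (a - al)/2 * b"
    using measure_box[of "-a/2" "-al/2" "-b/2" "b/2"] al b by (simp add: field_simps)
  also have "measure lborel ?P3 = al * ((be - b)/2)"
    using measure_box[of "-al/2" "al/2" "b/2" "be/2"] al b by (simp add: field_simps)
  also have "measure lborel ?P4 = al * ((be - b)/2)"
    using measure_box[of "-al/2" "al/2" "-be/2" "-b/2"] al b by (simp add: field_simps)
  finally show ?thesis by linarith
qed

lemma perim_ineq:
  fixes a al :: real
  assumes "1 \<le> a" "a < al"
  shows "2*a + 2*(1/a) < 2*al + 2*(1/al)"
proof -
  have pos: "0 < a*al" using assms by simp
  have "al + 1/al - (a + 1/a) = (al - a) * (a*al - 1) / (a*al)"
    using assms by (simp add: field_simps)
  moreover have "0 < (al - a) * (a*al - 1) / (a*al)"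
  proof -
    have "1 * 1 < a * al" using assms by (intro mult_le_less_imp_less) auto
    then show ?thesis using assms pos by (intro divide_pos_pos mult_pos_pos) auto
  qed
  ultimately show ?thesis by linarith
qed

lemma E_formula:
  assumes "0 < al"
  shows "energy t R (centered_rect al (1/al)) = 2*al + 2*(1/al) + Dist (centered_rect al (1/al)) R / t"
  using assms by (simp add: energy_def perim_crect)

lemma Emid:
  fixes a b t al :: real
  assumes ab: "a*b = 1" and b: "0 < b" "b \<le> a" and al: "a - b/4 \<le> al" "al \<le> a"
  shows "energy t (centered_rect a b) (centered_rect al (1/al)) = Gf a b t ((a-al)/2)"
proof -
  define x where "x = (a-al)/2"
  have alpos: "0 < al" using b al by simp
  have binv: "b \<le> 1/al"
  proof -
    have "1/a \<le> 1/al" using alpos al by (intro divide_left_mono) auto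
    moreover have "1/a = b" using ab b by (simp add: field_simps)
    ultimately show ?thesis by simp
  qed
  have D1: "Dist (centered_rect al (1/al)) (centered_rect a b) =
     al * ((1/al - b)/2)^2 + 2 * (b * ((a-al)/2)^2/2 - ((a-al)/2)^3/3)"
    using Dist_decomp(1)[OF alpos al(2) b(1) binv] Dist_decomp(3)[OF alpos al(2) b(1) binv] al b by simp
  have e1: "1/al - b = 2*b*x/al"
  proof -
    have "1 - b*al = 2*b*x" unfolding x_def using ab by (simp add: algebra_simps)
    then show ?thesis using alpos by (simp add: field_simps)
  qed
  have e2: "al * ((1/al - b)/2)^2 = b^2*x^2/(a-2*x)"
    unfolding e1 using alpos by (simp add: x_def power2_eq_square field_simps)
  have e3: "a - 2*x = al" unfolding x_def by (simp add: field_simps)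
  show ?thesis
    unfolding E_formula[OF alpos] D1 e2 Gf_def x_def[symmetric] e3 by (simp add: x_def)
qed

lemma core:
  fixes a b t \<Lambda> L :: real
  assumes ab: "a*b = 1" and b: "0 < b" "b \<le> a" and abL: "a + b < \<Lambda>"
    and L: "L = max \<Lambda> 3" and t: "0 < t" "t < 1/(1000*L^6)"
  shows "(\<exists>!R'. is_minimizer t (centered_rect a b) R') \<and>
       (\<forall>R'. is_minimizer t (centered_rect a b) R' \<longrightarrow>
          (\<exists>a' b' x y.
             R' = centered_rect a' b' \<and>
             a' = a - 2 * x \<and>
             \<bar>x - (2 * (a - b) / (b * (a + b))) * t\<bar> \<le> (100*L^3 + 20*L + 20) * t\<^sup>2 \<and>
             b' = b + 2 * y \<and> y = b * x / (a - 2 * x) \<and>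
             a' + b' \<le> a + b \<and>
             \<bar>a' - a\<bar> \<le> t * (100*L^3 + 20*L + 20) \<and> \<bar>b' - b\<bar> \<le> t * (100*L^3 + 20*L + 20) \<and>
             measure lborel ((centered_rect a b - R') \<union> (R' - centered_rect a b)) \<le> t * (100*L^3 + 20*L + 20)))"
proof -
  define C where "C = 100*L^3 + 20*L + 20"
  have L3: "3 \<le> L" unfolding L by simp
  have aL: "a < L" using abL b unfolding L by simp
  have Lpos: "0 < L" using L3 by simp
  obtain xs where xs: "0 \<le> xs" "xs \<le> (2*L+1)*t" "xs \<le> b/8"
     "\<bar>xs - 2*t*(1-b^2)/(b*(1+b^2))\<bar> \<le> 100*L^3*t^2"
     "\<And>x. 0 \<le> x \<Longrightarrow> x \<le> b/8 \<Longrightarrow> x \<noteq> xs \<Longrightarrow> Gf a b t xs < Gf a b t x"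
    using one_d[OF ab b L3 aL t] by blast
  define as where "as = a - 2*xs"
  define R where "R = centered_rect a b"
  define E where "E = (\<lambda>al. energy t R (centered_rect al (1/al)))"
  have b1: "b \<le> 1"
  proof (rule ccontr)
    assume "\<not> b \<le> 1"
    then have "1*1 < b*a" using b by (intro mult_strict_mono) auto
    then show False using ab by (simp add: mult.commute)
  qed
  have a1: "1 \<le> a"
  proof -
    have "a = 1/b" using ab b by (simp add: field_simps)
    then show ?thesis using b b1 by simp
  qed
  have binv: "1/a = b" using ab b by (simp add: field_simps)
  have as_ge: "a - b/4 \<le> as" "as \<le> a" unfolding as_def using xs by auto
  have as_pos: "0 < as" using as_ge b by simp
  have xs_as: "(a - as)/2 = xs" unfolding as_def by simp
  have Eas: "E as = Gf a b t xs"
    unfolding E_def R_def using Emid[OF ab b as_ge] xs_as by simp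
  have G0: "Gf a b t 0 = 2*a + 2*b" unfolding Gf_def using binv by simp
  have Ea: "E a = 2*a + 2*b"
    unfolding E_def R_def using Emid[OF ab b, of a] G0 b by simp
  have Gxs: "Gf a b t xs \<le> 2*a + 2*b"
  proof (cases "xs = 0")
    case True then show ?thesis using G0 by simp
  next
    case False then show ?thesis using xs(5)[of 0] G0 b by fastforce
  qed
  have Dnn: "\<And>S. 0 \<le> Dist S R / t" unfolding R_def using Dist_nonneg[OF _ b(1), of a] b t by simp
  have Egt: "\<And>al. 0 < al \<Longrightarrow> al \<noteq> as \<Longrightarrow> E as < E al"
  proof -
    fix al :: real assume al: "0 < al" "al \<noteq> as"
    have Eal: "E al = 2*al + 2*(1/al) + Dist (centered_rect al (1/al)) R / t"
      unfolding E_def by (rule E_formula[OF al(1)])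
    consider (big) "a < al" | (mid) "a - b/4 \<le> al \<and> al \<le> a" | (small) "al < a - b/4" by linarith
    then show "E as < E al"
    proof cases
      case big
      have "2*a + 2*(1/a) < 2*al + 2*(1/al)" by (rule perim_ineq[OF a1 big])
      then show ?thesis using Eal Eas Gxs Dnn[of "centered_rect al (1/al)"] binv by simp
    next
      case mid
      have "E al = Gf a b t ((a-al)/2)" unfolding E_def R_def using Emid[OF ab b] mid by simp
      moreover have "Gf a b t xs < Gf a b t ((a-al)/2)"
        by (rule xs(5)) (use mid al xs_as in auto)
      ultimately show ?thesis using Eas by simp
    next
      case small
      have ala: "al \<le> a" using small b by simp
      have bal: "b \<le> 1/al"
      proof -
        have "1/a \<le> 1/al" using al ala by (intro divide_left_mono) auto
        then show ?thesis using binv by simp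
      qed
      define m where "m = al * ((1/al - b)/2)^2"
      have Dm: "m \<le> Dist (centered_rect al (1/al)) R"
        unfolding R_def m_def using Dist_decomp(1,2)[OF al(1) ala b(1) bal] by linarith
      have m_eq: "m = (1 - b*al)^2 * (1/(4*al))"
        unfolding m_def using al by (simp add: field_simps power2_eq_square)
      have m1: "b^2/4 < 1 - b*al"
      proof -
        have "b*al < b*(a - b/4)" using small b by simp
        also have "\<dots> = 1 - b^2/4" using ab by (simp add: algebra_simps power2_eq_square)
        finally show ?thesis by simp
      qed
      have m2: "(b^2/4)^2 < (1 - b*al)^2"
        using m1 b by (intro power_strict_mono) auto
      have m3: "b/4 < 1/(4*al)"
      proof -
        have "1/(4*a) < 1/(4*al)" using al small b by (intro divide_strict_left_mono) auto
        then show ?thesis using binv by (simp add: field_simps)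
      qed
      have m4: "(b^2/4)^2 * (b/4) < (1 - b*al)^2 * (1/(4*al))"
        using m2 m3 b by (intro mult_strict_mono) auto
      have e5: "(b^2/4)^2 * (b/4) = b^5/64" by (simp add: eval_nat_numeral field_simps)
      have m5: "b^5/64 < m" using m4 unfolding e5 m_eq .
      have bL: "1 < b*L"
      proof -
        have "a*b < L*b" using aL b by simp
        then show ?thesis using ab by (simp add: mult.commute)
      qed
      have bL5: "1 < (b*L)^5" using bL by simp
      have "2*L < (1000/64) * L * (b*L)^5"
      proof -
        have "2*L < (1000/64) * L * 1" using Lpos by simp
        also have "\<dots> < (1000/64) * L * (b*L)^5" using bL5 Lpos by (intro mult_strict_left_mono) auto
        finally show ?thesis .
      qed
      also have "(1000/64) * L * (b*L)^5 = (b^5/64) * (1000*L^6)" by (simp add: power_mult_distrib field_simps eval_nat_numeral)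
      also have "\<dots> < m * (1000*L^6)" using m5 Lpos by (intro mult_strict_right_mono) auto
      also have "\<dots> \<le> Dist (centered_rect al (1/al)) R * (1000*L^6)" using Dm Lpos by (intro mult_right_mono) auto
      also have "\<dots> \<le> Dist (centered_rect al (1/al)) R * (1/t)"
      proof (rule mult_left_mono)
        show "1000*L^6 \<le> 1/t" using t Lpos by (simp add: field_simps)
        show "0 \<le> Dist (centered_rect al (1/al)) R" unfolding R_def by (rule Dist_nonneg[OF _ b(1)]) (use b in simp)
      qed
      also have "\<dots> = Dist (centered_rect al (1/al)) R / t" by simp
      finally have big: "2*L < Dist (centered_rect al (1/al)) R / t" .
      have "2*a + 2*b < 2*L" using abL unfolding L by simp
      moreover have "0 \<le> 2*al + 2*(1/al)" using al by simp
      ultimately show ?thesis using Eal Eas Gxs big by linarith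
    qed
  qed
  define Rs where "Rs = centered_rect as (1/as)"
  have adm_s: "admissible Rs" unfolding Rs_def adm_iff using as_pos by blast
  have min_s: "is_minimizer t R Rs"
    unfolding is_minimizer_def
  proof (intro conjI adm_s allI impI)
    fix T assume "admissible T"
    then obtain al where al: "0 < al" "T = centered_rect al (1/al)" unfolding adm_iff by blast
    show "energy t R Rs \<le> energy t R T"
    proof (cases "al = as")
      case True then show ?thesis using al Rs_def by simp
    next
      case False then show ?thesis using Egt[OF al(1) False] al unfolding E_def Rs_def by simp
    qed
  qed
  have uniq: "\<And>R'. is_minimizer t R R' \<Longrightarrow> R' = Rs"
  proof -
    fix R' assume m: "is_minimizer t R R'"
    then obtain al where al: "0 < al" "R' = centered_rect al (1/al)" unfolding is_minimizer_def adm_iff by blast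
    have "energy t R R' \<le> energy t R Rs" using m adm_s unfolding is_minimizer_def by blast
    then have "\<not> E as < E al" unfolding E_def Rs_def al(2) by simp
    then have "al = as" using Egt[OF al(1)] by blast
    then show "R' = Rs" using al Rs_def by simp
  qed
  have part1: "\<exists>!R'. is_minimizer t R R'" using min_s uniq by blast
  have part2: "\<exists>a' b' x y.
             Rs = centered_rect a' b' \<and>
             a' = a - 2 * x \<and>
             \<bar>x - (2 * (a - b) / (b * (a + b))) * t\<bar> \<le> C * t\<^sup>2 \<and>
             b' = b + 2 * y \<and> y = b * x / (a - 2 * x) \<and>
             a' + b' \<le> a + b \<and>
             \<bar>a' - a\<bar> \<le> t * C \<and> \<bar>b' - b\<bar> \<le> t * C \<and>
             measure lborel ((R - Rs) \<union> (Rs - R)) \<le> t * C"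
  proof (intro exI conjI)
    show "Rs = centered_rect as (1/as)" by (simp add: Rs_def)
    show "as = a - 2*xs" by (simp add: as_def)
    have ainv: "a = 1/b" using ab b by (simp add: field_simps)
    have bp: "0 < b*(1+b^2)" using b by (simp add: add_pos_nonneg)
    have e1: "a - b = (1-b^2)/b" unfolding ainv using b by (simp add: field_simps power2_eq_square)
    have e2: "b * (a + b) = 1+b^2" unfolding ainv using b by (simp add: field_simps power2_eq_square)
    have "2 * (a - b) / (b * (a + b)) * t = 2*t*(1-b^2)/(b*(1+b^2))"
      unfolding e1 e2 using b bp by (simp add: field_simps)
    moreover have "100*L^3*t^2 \<le> C * t^2" unfolding C_def using Lpos by (intro mult_right_mono) auto
    ultimately show "\<bar>xs - (2 * (a - b) / (b * (a + b))) * t\<bar> \<le> C * t\<^sup>2" using xs(4) by simp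
    have asx: "a - 2*xs = as" by (simp add: as_def)
    show y: "1/as = b + 2 * (b * xs / (a - 2*xs))"
      unfolding asx using as_pos ab by (simp add: field_simps as_def)
    show "b * xs / (a - 2*xs) = b * xs / (a - 2*xs)" ..
    have "E as \<le> E a"
    proof (cases "as = a")
      case True then show ?thesis by simp
    next
      case False then show ?thesis using Egt[of a] b by fastforce
    qed
    moreover have "E as = 2*as + 2*(1/as) + Dist (centered_rect as (1/as)) R / t"
      unfolding E_def by (rule E_formula[OF as_pos])
    ultimately show "as + 1/as \<le> a + b" using Ea Dnn[of "centered_rect as (1/as)"] by linarith
    have CL: "(8*L+4) \<le> C" unfolding C_def using Lpos by simp
    have xsL: "4*xs \<le> (8*L+4)*t" using xs(2) by (simp add: algebra_simps)
    have xsC: "4*xs \<le> t*C" using xsL CL t by (smt (verit) mult.commute mult_right_mono)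
    show "\<bar>as - a\<bar> \<le> t * C" using xsC xs(1) unfolding as_def by simp
    have bxs: "b * xs \<le> xs" by (rule mult_left_le_one_le) (use b b1 xs(1) in auto)
    have as34: "1/2 \<le> as" using as_ge b b1 a1 by simp
    have y_le: "b * xs / (a - 2*xs) \<le> 2*xs"
    proof -
      have "b * xs / as \<le> xs / as" using bxs as_pos by (intro divide_right_mono) simp_all
      also have "\<dots> \<le> xs / (1/2)" using as34 xs(1) by (intro divide_left_mono) auto
      finally show ?thesis unfolding asx by simp
    qed
    have y_nn: "0 \<le> b * xs / (a - 2*xs)" unfolding asx using b xs(1) as_pos by simp
    have d: "1/as - b = 2*(b*xs/(a-2*xs))" using y by linarith
    show "\<bar>1/as - b\<bar> \<le> t * C" unfolding abs_le_iff using d y_le y_nn xsC by linarith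
    have bas: "b \<le> 1/as"
    proof -
      have "1/a \<le> 1/as" using as_pos as_ge by (intro divide_left_mono) auto
      then show ?thesis using binv by simp
    qed
    have "measure lborel ((R - Rs) \<union> (Rs - R)) \<le> 2 * ((a - as)/2 * b) + 2 * (as * ((1/as - b)/2))"
      unfolding R_def Rs_def by (rule symdiff_measure[OF as_pos as_ge(2) b(1) bas])
    also have "as * ((1/as - b)/2) = b * xs"
      unfolding y using as_pos by (simp add: asx)
    also have "2 * ((a - as)/2 * b) + 2 * (b * xs) = 4 * (b * xs)" unfolding as_def by simp
    also have "\<dots> \<le> 4 * xs" using bxs by simp
    also have "\<dots> \<le> t * C" by (rule xsC)
    finally show "measure lborel ((R - Rs) \<union> (Rs - R)) \<le> t * C" .
  qed
  show ?thesis using part1 part2 uniq unfolding R_def C_def by metis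
qed

theorem theorem2p8:
  fixes \<Lambda> :: real
  shows "\<exists>\<tau>0 > 0. \<exists>C. \<forall>a b :: real.
     0 < b \<and> b \<le> a \<and> a * b = 1 \<and> a + b < \<Lambda> \<longrightarrow>
     (\<forall>\<tau>. 0 < \<tau> \<and> \<tau> < \<tau>0 \<longrightarrow>
       (\<exists>!R'. is_minimizer \<tau> (centered_rect a b) R') \<and>
       (\<forall>R'. is_minimizer \<tau> (centered_rect a b) R' \<longrightarrow>
          (\<exists>a' b' x y.
             R' = centered_rect a' b' \<and>
             a' = a - 2 * x \<and>
             \<bar>x - (2 * (a - b) / (b * (a + b))) * \<tau>\<bar> \<le> C * \<tau>\<^sup>2 \<and>
             b' = b + 2 * y \<and> y = b * x / (a - 2 * x) \<and>
             a' + b' \<le> a + b \<and>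
             \<bar>a' - a\<bar> \<le> \<tau> * C \<and> \<bar>b' - b\<bar> \<le> \<tau> * C \<and>
             measure lborel ((centered_rect a b - R') \<union> (R' - centered_rect a b)) \<le> \<tau> * C)))"
proof -
  define L where "L = max \<Lambda> 3"
  have L3: "3 \<le> L" by (simp add: L_def)
  define T0 where "T0 = 1/(1000*L^6)"
  have pos: "0 < T0" using L3 by (simp add: T0_def)
  show ?thesis
  proof (rule exI[of _ T0], rule conjI[OF pos], rule exI[of _ "100*L^3 + 20*L + 20"], intro allI impI)
    fix a b \<tau> :: real
    assume H: "0 < b \<and> b \<le> a \<and> a * b = 1 \<and> a + b < \<Lambda>" and T: "0 < \<tau> \<and> \<tau> < T0"
    have tt: "\<tau> < 1/(1000*L^6)" using T unfolding T0_def by simp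
    note c = core[of a b \<Lambda> L \<tau>, OF _ _ _ _ L_def _ tt]
    show "(\<exists>!R'. is_minimizer \<tau> (centered_rect a b) R') \<and>
       (\<forall>R'. is_minimizer \<tau> (centered_rect a b) R' \<longrightarrow>
          (\<exists>a' b' x y.
             R' = centered_rect a' b' \<and>
             a' = a - 2 * x \<and>
             \<bar>x - (2 * (a - b) / (b * (a + b))) * \<tau>\<bar> \<le> (100*L^3 + 20*L + 20) * \<tau>\<^sup>2 \<and>
             b' = b + 2 * y \<and> y = b * x / (a - 2 * x) \<and>
             a' + b' \<le> a + b \<and>
             \<bar>a' - a\<bar> \<le> \<tau> * (100*L^3 + 20*L + 20) \<and> \<bar>b' - b\<bar> \<le> \<tau> * (100*L^3 + 20*L + 20) \<and>
             measure lborel ((centered_rect a b - R') \<union> (R' - centered_rect a b)) \<le> \<tau> * (100*L^3 + 20*L + 20)))"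
      by (rule c) (use H T in auto)
  qed
qed

end
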